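(* Let $N\ge 1$, $\varepsilon>0$, $T>0$, and let $\mathbf{A}:\mathbb{R}^N\to\mathbb{R}^N$ and $U:\mathbb{R}^N\to\mathbb{R}$ be smooth. Let $\psi(\mathbf{x},t)$ be a smooth solution on $\mathbb{R}^N\times[0,T]$ of \[ i\varepsilon\,\partial_t\psi=-\frac{\varepsilon^2}{2}\Delta_{\mathbf{x}}\psi+i\varepsilon\,\mathbf{A}(\mathbf{x})\cdot\nabla_{\mathbf{x}}\psi+U(\mathbf{x})\psi . \] Let $\bm q(t),\bm p(t)\in\mathbb{R}^N$, a complex symmetric matrix $\bm\alpha(t)=\bm\alpha_R(t)+i\bm\alpha_I(t)$ (with $\bm\alpha_R,\bm\alpha_I$ real symmetric), $\gamma_2(t)\in\mathbb{C}$ and a real $N\times N$ matrix $\bm B(t)$ be smooth functions on $[0,T]$ satisfying \[ \begin{aligned} \dot{\bm q}&=\bm p-\mathbf{A}(\bm q),\qquad \dot{\bm p}=\nabla\mathbf{A}(\bm q)^T\bm p-\nabla U(\bm q),\\ \dot{\bm\alpha}&=-2\bm\alpha^2-\tfrac12\nabla\nabla U(\bm q)+\nabla\mathbf{A}(\bm q)^T\bm\alpha+\bm\alpha\nabla\mathbf{A}(\bm q)+\tfrac12\nabla\nabla\mathbf{A}(\bm q)\cdot\bm p,\\ \dot\gamma_2&=\tfrac12|\bm p|^2-U(\bm q)+i\varepsilon\,\mathrm{Tr}(\bm\alpha_R),\qquad \dot{\bm B}=-2\bm B\bm\alpha_R+\bm B\nabla\mathbf{A}(\bm q), \end{aligned}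 \] with $\bm\alpha_I(0)$ positive definite, $\bm B(0)=\sqrt{\bm\alpha_I(0)}$, and assume $\bm B(t)$ is invertible for all $t\in[0,T]$. Writing $\bm\xi=\mathbf{x}-\bm q(t)$, define $w$ on $\mathbb{R}^N\times[0,T]$ by \[ \psi(\mathbf{x},t)=w\!\left(\bm B(t)\bm\xi/\sqrt{\varepsilon},\,t\right)\exp\!\left(\frac{i}{\varepsilon}\left(\bm\xi^T\bm\alpha_R\bm\xi+\bm p^T\bm\xi+\gamma_2\right)\right), \] i.e. $w(\bm\eta,t)=\psi(\bm q+\sqrt\varepsilon\bm B^{-1}\bm\eta,t)\exp(-\frac{i}{\varepsilon}(\bm\xi^T\bm\alpha_R\bm\xi+\bm p^T\bm\xi+\gamma_2))$ with $\bm\xi=\sqrt\varepsilon\bm B^{-1}\bm\eta$. Then $w$ satisfies, with $\bm\xi=\sqrt{\varepsilon}\bm B^{-1}\bm\eta$, \[ w_t=\frac{i}{2}\mathrm{Tr}\!\left(\bm B^T\nabla_{\bm\eta}\nabla_{\bm\eta}w\,\bm B\right)-2i\,\bm\eta^T(\bm B^T)^{-1}\bm\alpha_I^2\bm B^{-1}\bm\eta\,w+\frac{1}{\sqrt\varepsilon}\nabla_{\bm\eta}w^T\bm B\mathbf{A}_{(1)}+\frac{1}{i\varepsilon}\left(U_r-2\sqrt\varepsilon\,\mathbf{A}_{(1)}^T\bm\alpha_R\bm B^{-1}\bm\eta-\mathbf{A}_r^T\bm p\right)w, \] where $\mathbf{A}_{(1)},\mathbf{A}_r,U_r$ are evaluated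 at $\bm\xi=\sqrt\varepsilon\bm B^{-1}\bm\eta$ and time $t$.
   Context: Notation: $(\nabla\mathbf{A})_{jk}=\partial A_j/\partial x_k$, $(\nabla\nabla U)_{jk}=\partial^2U/\partial x_j\partial x_k$, $(\nabla\nabla\mathbf{A}\cdot\bm p)_{jk}=\sum_\ell \frac{\partial^2A_\ell}{\partial x_j\partial x_k}p_\ell$, all evaluated at $\bm q(t)$; $\nabla_{\bm\eta}\nabla_{\bm\eta}w$ is the Hessian of $w$ in $\bm\eta$. The remainders are defined by $\mathbf{A}_{(1)}=\mathbf{A}(\bm\xi+\bm q)-\mathbf{A}(\bm q)-\nabla\mathbf{A}(\bm q)\bm\xi$, $\mathbf{A}_r=\mathbf{A}_{(1)}-\mathbf{A}_q$ where $(\mathbf{A}_q)_j=\frac12\sum_{\ell,\ell'}\frac{\partial^2A_j(\bm q)}{\partial x_\ell\partial x_{\ell'}}\xi_\ell\xi_{\ell'}$, and $U_r=U(\bm\xi+\bm q)-U(\bm q)-\bm\xi^T\nabla U(\bm q)-\frac12\bm\xi^T\nabla\nabla U(\bm q)\bm\xi$. $\sqrt{\bm\alpha_I(0)}$ is the positive definite square root. *)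

theory Defs
  imports "HOL-Analysis.Analysis"
begin

definition pd_within :: "'a::euclidean_space set \<Rightarrow> 'a \<Rightarrow> ('a \<Rightarrow> 'b::real_normed_vector) \<Rightarrow> 'a \<Rightarrow> 'b" where
  "pd_within S v f x = frechet_derivative f (at x within S) v"

fun iter_pd :: "'a::euclidean_space set \<Rightarrow> 'a list \<Rightarrow> ('a \<Rightarrow> 'b::real_normed_vector) \<Rightarrow> 'a \<Rightarrow> 'b" where
  "iter_pd S [] f = f"
| "iter_pd S (v # vs) f = pd_within S v (iter_pd S vs f)"

definition C_inf_on :: "'a::euclidean_space set \<Rightarrow> ('a \<Rightarrow> 'b::real_normed_vector) \<Rightarrow> bool" where
  "C_inf_on S f \<longleftrightarrow> (\<forall>vs. set vs \<subseteq> Basis \<longrightarrow> iter_pd S vs f differentiable_on S)"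

definition pdx :: "'n::finite \<Rightarrow> (real^'n \<Rightarrow> 'b::real_normed_vector) \<Rightarrow> real^'n \<Rightarrow> 'b" where
  "pdx j f x = frechet_derivative f (at x) (axis j 1)"

definition grad :: "(real^'n \<Rightarrow> real) \<Rightarrow> real^'n \<Rightarrow> real^'n" where
  "grad U x = (\<chi> j. pdx j U x)"

definition jac :: "(real^'n \<Rightarrow> real^'n) \<Rightarrow> real^'n \<Rightarrow> real^'n^'n" where
  "jac A x = (\<chi> j k. pdx k (\<lambda>y. A y $ j) x)"

definition hess :: "(real^'n \<Rightarrow> 'b::real_normed_vector) \<Rightarrow> real^'n \<Rightarrow> 'b^'n^'n" where
  "hess f x = (\<chi> j k. pdx j (pdx k f) x)"

definition hessA_dot :: "(real^'n \<Rightarrow> real^'n) \<Rightarrow> real^'n \<Rightarrow> real^'n \<Rightarrow> real^'n^'n" where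
  "hessA_dot A x p = (\<chi> j k. \<Sum>l\<in>UNIV. hess (\<lambda>y. A y $ l) x $ j $ k * p $ l)"

definition laplacian :: "(real^'n \<Rightarrow> complex) \<Rightarrow> real^'n \<Rightarrow> complex" where
  "laplacian f x = (\<Sum>j\<in>UNIV. pdx j (pdx j f) x)"

definition cmat :: "real^'n^'m \<Rightarrow> complex^'n^'m" where
  "cmat M = (\<chi> i j. complex_of_real (M $ i $ j))"

definition cvec :: "real^'n \<Rightarrow> complex^'n" where
  "cvec v = (\<chi> i. complex_of_real (v $ i))"

definition cplx_mat :: "real^'n^'m \<Rightarrow> real^'n^'m \<Rightarrow> complex^'n^'m" where
  "cplx_mat R I = (\<chi> i j. Complex (R $ i $ j) (I $ i $ j))"

definition symmetric_mat :: "'a^'n^'n \<Rightarrow> bool" where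
  "symmetric_mat M \<longleftrightarrow> transpose M = M"

definition pos_def :: "real^'n^'n \<Rightarrow> bool" where
  "pos_def M \<longleftrightarrow> symmetric_mat M \<and> (\<forall>v. v \<noteq> 0 \<longrightarrow> v \<bullet> (M *v v) > 0)"

definition pos_sqrt :: "real^'n^'n \<Rightarrow> real^'n^'n" where
  "pos_sqrt M = (THE S. pos_def S \<and> S ** S = M)"

definition A1 :: "(real^'n \<Rightarrow> real^'n) \<Rightarrow> real^'n \<Rightarrow> real^'n \<Rightarrow> real^'n" where
  "A1 A q \<xi> = A (\<xi> + q) - A q - jac A q *v \<xi>"

definition Aq :: "(real^'n \<Rightarrow> real^'n) \<Rightarrow> real^'n \<Rightarrow> real^'n \<Rightarrow> real^'n" where
  "Aq A q \<xi> = (\<chi> j. (1/2) * (\<Sum>l\<in>UNIV. \<Sum>l'\<in>UNIV. hess (\<lambda>y. A y $ j) q $ l $ l' * \<xi> $ l * \<xi> $ l'))"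

definition Ar :: "(real^'n \<Rightarrow> real^'n) \<Rightarrow> real^'n \<Rightarrow> real^'n \<Rightarrow> real^'n" where
  "Ar A q \<xi> = A1 A q \<xi> - Aq A q \<xi>"

definition Ur :: "(real^'n \<Rightarrow> real) \<Rightarrow> real^'n \<Rightarrow> real^'n \<Rightarrow> real" where
  "Ur U q \<xi> = U (\<xi> + q) - U q - \<xi> \<bullet> grad U q - (1/2) * (\<xi> \<bullet> (hess U q *v \<xi>))"

end

theory Submission
  imports Defs
begin

lemma bilinear_mv: "bilinear (\<lambda>(M::real^'n^'m) (v::real^'n). M *v v)"
  unfolding bilinear_def
  by (auto intro!: linearI simp: matrix_vector_mult_def vec_eq_iff algebra_simps sum.distrib sum_distrib_left matrix_vector_right_distrib)

lemma bb_mv: "bounded_bilinear (\<lambda>(M::real^'n^'m) (v::real^'n). M *v v)"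
  using bilinear_mv bilinear_conv_bounded_bilinear by blast

lemmas has_derivative_mv = bounded_bilinear.FDERIV[OF bb_mv]

lemma pdx_at: "(f has_derivative f') (at x) \<Longrightarrow> pdx j f x = f' (axis j 1)"
  unfolding pdx_def using frechet_derivative_at by metis

lemma fd_expand:
  fixes f :: "real^'n \<Rightarrow> 'b::real_normed_vector"
  assumes "f differentiable at x"
  shows "frechet_derivative f (at x) v = (\<Sum>a\<in>UNIV. v$a *\<^sub>R pdx a f x)"
proof -
  have lin: "linear (frechet_derivative f (at x))"
    using assms frechet_derivative_works has_derivative_linear by blast
  have "v = (\<Sum>a\<in>UNIV. v$a *\<^sub>R axis a 1)"
    using basis_expansion[of v] by (simp add: scalar_mult_eq_scaleR)
  then have "frechet_derivative f (at x) v = frechet_derivative f (at x) (\<Sum>a\<in>UNIV. v$a *\<^sub>R axis a 1)" by simp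
  also have "\<dots> = (\<Sum>a\<in>UNIV. v$a *\<^sub>R frechet_derivative f (at x) (axis a 1))"
    using lin by (simp add: linear_sum linear_scale)
  finally show ?thesis by (simp add: pdx_def)
qed

lemma aff_has:
  fixes G :: "real^'n \<Rightarrow> 'b::real_normed_vector" and M :: "real^'n^'n"
  assumes "G differentiable at (x0 + M *v z)"
  shows "((\<lambda>z. G (x0 + M *v z)) has_derivative (\<lambda>v. frechet_derivative G (at (x0 + M *v z)) (M *v v))) (at z)"
proof -
  have 1: "((\<lambda>z. x0 + M *v z) has_derivative (\<lambda>v. M *v v)) (at z)"
    by (auto intro!: derivative_eq_intros bounded_linear.has_derivative[OF matrix_vector_mul_bounded_linear])
  have 2: "(G has_derivative frechet_derivative G (at (x0 + M *v z))) (at (x0 + M *v z))"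
    using assms frechet_derivative_works by blast
  show ?thesis using diff_chain_at[OF 1 2] by (simp add: o_def)
qed

lemma mv_axis: "((M::real^'n^'n) *v axis k 1) $ a = M $ a $ k"
  by (simp add: matrix_vector_mult_def axis_def if_distrib cong: if_cong)

lemma aff_pdx:
  fixes G :: "real^'n \<Rightarrow> 'b::real_normed_vector" and M :: "real^'n^'n"
  assumes "G differentiable at (x0 + M *v z)"
  shows "pdx k (\<lambda>z. G (x0 + M *v z)) z = (\<Sum>a\<in>UNIV. M$a$k *\<^sub>R pdx a G (x0 + M *v z))"
  using pdx_at[OF aff_has[OF assms]] fd_expand[OF assms] by (simp add: mv_axis)

lemma aff_diff:
  fixes G :: "real^'n \<Rightarrow> 'b::real_normed_vector" and M :: "real^'n^'n"
  assumes "G differentiable at (x0 + M *v z)"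
  shows "(\<lambda>z. G (x0 + M *v z)) differentiable at z"
  using aff_has[OF assms] differentiable_def by blast

lemma aff_hess:
  fixes W :: "real^'n \<Rightarrow> complex" and M :: "real^'n^'n"
  assumes dW: "\<And>y. W differentiable at y" and d2: "\<And>a y. pdx a W differentiable at y"
  shows "hess (\<lambda>z. W (x0 + M *v z)) z = cmat (transpose M) ** hess W (x0 + M *v z) ** cmat M"
proof -
  have e1: "pdx k (\<lambda>z. W (x0 + M *v z)) = (\<lambda>z. \<Sum>a\<in>UNIV. M$a$k *\<^sub>R pdx a W (x0 + M *v z))" for k
    using aff_pdx[OF dW] by blast
  have hd: "((\<lambda>z. \<Sum>a\<in>UNIV. M$a$k *\<^sub>R pdx a W (x0 + M *v z)) has_derivative
     (\<lambda>v. \<Sum>a\<in>UNIV. M$a$k *\<^sub>R frechet_derivative (pdx a W) (at (x0 + M *v z)) (M *v v))) (at z)" for k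
    by (intro has_derivative_sum has_derivative_scaleR_right aff_has d2)
  have e2: "pdx j (pdx k (\<lambda>z. W (x0 + M *v z))) z
      = (\<Sum>a\<in>UNIV. M$a$k *\<^sub>R (\<Sum>b\<in>UNIV. M$b$j *\<^sub>R pdx b (pdx a W) (x0 + M *v z)))" for j k
    unfolding e1 pdx_at[OF hd] using fd_expand[OF d2] by (simp add: mv_axis)
  show ?thesis
    unfolding hess_def
    by (simp add: vec_eq_iff e2 matrix_matrix_mult_def cmat_def transpose_def scaleR_conv_of_real
        sum_distrib_left sum_distrib_right mult.commute)
qed

lemma cinf_diff: "C_inf_on S f \<Longrightarrow> f differentiable_on S"
  unfolding C_inf_on_def by (metis empty_subsetI empty_set iter_pd.simps(1))

lemma cinf_diff1: "C_inf_on S f \<Longrightarrow> v \<in> Basis \<Longrightarrow> pd_within S v f differentiable_on S"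
  unfolding C_inf_on_def
  by (metis empty_subsetI empty_set insert_subset iter_pd.simps list.simps(15))

lemma slice_x:
  fixes F :: "(real^'n) \<times> real \<Rightarrow> 'b::real_normed_vector"
  assumes "F differentiable at (x,t) within (UNIV \<times> I)" "t \<in> I"
  shows "((\<lambda>y. F (y,t)) has_derivative (\<lambda>v. frechet_derivative F (at (x,t) within UNIV \<times> I) (v,0))) (at x)"
proof -
  have 1: "((\<lambda>y. (y,t)) has_derivative (\<lambda>v. (v,0))) (at x)"
    by (rule has_derivative_Pair[OF has_derivative_ident has_derivative_const])
  have 2: "(F has_derivative frechet_derivative F (at (x,t) within UNIV \<times> I)) (at (x,t) within (\<lambda>y. (y,t)) ` UNIV)"
    by (rule has_derivative_subset[OF iffD1[OF frechet_derivative_works assms(1)]]) (use assms in auto)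
  show ?thesis using diff_chain_within[OF 1 2]
    by (simp add: o_def)
qed

lemma slice_t:
  fixes F :: "(real^'n) \<times> real \<Rightarrow> 'b::real_normed_vector"
  assumes "F differentiable at (x,t) within (UNIV \<times> I)"
  shows "((\<lambda>s. F (x,s)) has_vector_derivative (frechet_derivative F (at (x,t) within UNIV \<times> I) (0,1))) (at t within I)"
proof -
  have 1: "((\<lambda>s. (x,s)) has_derivative (\<lambda>h. (0,h))) (at t within I)"
    by (rule has_derivative_Pair[OF has_derivative_const has_derivative_ident])
  have 2: "(F has_derivative frechet_derivative F (at (x,t) within UNIV \<times> I)) (at (x,t) within (\<lambda>s. (x,s)) ` I)"
    by (rule has_derivative_subset[OF iffD1[OF frechet_derivative_works assms(1)]]) (use assms in auto)
  have 3: "bounded_linear (frechet_derivative F (at (x,t) within UNIV \<times> I))"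
    using assms frechet_derivative_works has_derivative_bounded_linear by blast
  have e: "frechet_derivative F (at (x,t) within UNIV \<times> I) (0,h) = h *\<^sub>R frechet_derivative F (at (x,t) within UNIV \<times> I) (0,1)" for h
    using linear_scale[OF bounded_linear.linear[OF 3], of h "(0,1)"] by simp
  have ee: "(\<lambda>h. frechet_derivative F (at (x,t) within UNIV \<times> I) (0,h)) = (\<lambda>h. h *\<^sub>R frechet_derivative F (at (x,t) within UNIV \<times> I) (0,1))"
    using e by (rule ext)
  show ?thesis using diff_chain_within[OF 1 2] unfolding has_vector_derivative_def o_def ee .
qed

lemma basis_x: "((axis j 1)::real^'n, 0::real) \<in> Basis"
  by (simp add: Basis_prod_def)

lemma chain_t:
  fixes F :: "(real^'n) \<times> real \<Rightarrow> 'b::real_normed_vector"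
  assumes "F differentiable at (X t, t) within (UNIV \<times> I)"
    and "(X has_vector_derivative X') (at t within I)"
  shows "((\<lambda>s. F (X s, s)) has_vector_derivative (frechet_derivative F (at (X t,t) within UNIV \<times> I) (X',1))) (at t within I)"
proof -
  have 1: "((\<lambda>s. (X s,s)) has_derivative (\<lambda>h. (h *\<^sub>R X', h))) (at t within I)"
    using has_derivative_Pair[OF assms(2)[unfolded has_vector_derivative_def] has_derivative_ident] .
  have 2: "(F has_derivative frechet_derivative F (at (X t,t) within UNIV \<times> I)) (at (X t,t) within (\<lambda>s. (X s,s)) ` I)"
    by (rule has_derivative_subset[OF iffD1[OF frechet_derivative_works assms(1)]]) (use assms in auto)
  have 3: "bounded_linear (frechet_derivative F (at (X t,t) within UNIV \<times> I))"
    using assms frechet_derivative_works has_derivative_bounded_linear by blast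
  have e: "(h *\<^sub>R X', h) = h *\<^sub>R (X', 1)" for h by simp
  have e2: "frechet_derivative F (at (X t,t) within UNIV \<times> I) (h *\<^sub>R X', h) = h *\<^sub>R frechet_derivative F (at (X t,t) within UNIV \<times> I) (X',1)" for h
    unfolding e by (rule linear_scale[OF bounded_linear.linear[OF 3]])
  have ee: "(\<lambda>h. frechet_derivative F (at (X t,t) within UNIV \<times> I) (h *\<^sub>R X', h)) = (\<lambda>h. h *\<^sub>R frechet_derivative F (at (X t,t) within UNIV \<times> I) (X',1))"
    using e2 by (rule ext)
  show ?thesis using diff_chain_within[OF 1 2] unfolding has_vector_derivative_def o_def ee .
qed

lemma fd_split:
  fixes F :: "(real^'n) \<times> real \<Rightarrow> 'b::real_normed_vector"
  assumes "F differentiable at z within S"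
  shows "frechet_derivative F (at z within S) (v,h) = frechet_derivative F (at z within S) (v,0) + h *\<^sub>R frechet_derivative F (at z within S) (0,1)"
proof -
  have 3: "linear (frechet_derivative F (at z within S))"
    using assms frechet_derivative_works has_derivative_bounded_linear bounded_linear.linear by blast
  have "(v,h) = (v,0) + h *\<^sub>R (0,1)" by simp
  then show ?thesis using linear_add[OF 3, of "(v,0)" "h *\<^sub>R (0,1)"] linear_scale[OF 3, of h "(0,1)"] by simp
qed

locale psiloc =
  fixes \<psi> :: "real^'n \<Rightarrow> real \<Rightarrow> complex" and I :: "real set"
  assumes C: "C_inf_on (UNIV \<times> I) (\<lambda>(x, t). \<psi> x t)"
begin

abbreviation "Psi \<equiv> (\<lambda>(x, t). \<psi> x t)"

lemma Psi_diff: "Psi differentiable at z within (UNIV \<times> I)" if "z \<in> UNIV \<times> I"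
  using cinf_diff[OF C] that differentiable_on_def by blast

lemma P_diff: "pd_within (UNIV \<times> I) (axis j 1, 0) Psi differentiable at z within (UNIV \<times> I)" if "z \<in> UNIV \<times> I"
  using cinf_diff1[OF C basis_x] that differentiable_on_def by blast

lemma psi_has: "t \<in> I \<Longrightarrow> ((\<lambda>y. \<psi> y t) has_derivative (\<lambda>v. frechet_derivative Psi (at (x,t) within UNIV \<times> I) (v,0))) (at x)"
  using slice_x[OF Psi_diff, of x t] by simp

lemma psi_diff: "t \<in> I \<Longrightarrow> (\<lambda>y. \<psi> y t) differentiable at x"
  using psi_has differentiable_def by blast

lemma psi_pdx: "t \<in> I \<Longrightarrow> pdx j (\<lambda>y. \<psi> y t) x = pd_within (UNIV \<times> I) (axis j 1, 0) Psi (x,t)"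
  using pdx_at[OF psi_has] by (simp add: pd_within_def)

lemma psi_pdx_diff: "t \<in> I \<Longrightarrow> pdx j (\<lambda>y. \<psi> y t) differentiable at x"
proof -
  assume t: "t \<in> I"
  have "pdx j (\<lambda>y. \<psi> y t) = (\<lambda>y. pd_within (UNIV \<times> I) (axis j 1, 0) Psi (y,t))"
    using psi_pdx[OF t] by blast
  then show ?thesis using slice_x[OF P_diff, of x t] t differentiable_def by fastforce
qed

lemma psi_fd: "t \<in> I \<Longrightarrow> frechet_derivative Psi (at (x,t) within UNIV \<times> I) (v,0) = (\<Sum>a\<in>UNIV. v$a *\<^sub>R pdx a (\<lambda>y. \<psi> y t) x)"
  using fd_expand[OF psi_diff, of t x v] frechet_derivative_at[OF psi_has, of t x] by metis

lemma psi_t: "t \<in> I \<Longrightarrow> ((\<lambda>s. \<psi> x s) has_vector_derivative frechet_derivative Psi (at (x,t) within UNIV \<times> I) (0,1)) (at t within I)"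
  using slice_t[OF Psi_diff, of x t] by simp

end

lemma pdx_mult:
  fixes f h :: "real^'n \<Rightarrow> complex"
  assumes "f differentiable at y" "h differentiable at y"
  shows "pdx a (\<lambda>y. f y * h y) y = pdx a f y * h y + f y * pdx a h y"
proof -
  have "((\<lambda>y. f y * h y) has_derivative (\<lambda>v. f y * frechet_derivative h (at y) v + frechet_derivative f (at y) v * h y)) (at y)"
    using assms by (intro has_derivative_mult) (auto simp: frechet_derivative_works)
  from pdx_at[OF this] show ?thesis by (simp add: pdx_def)
qed

lemma pdx_add:
  fixes f h :: "real^'n \<Rightarrow> complex"
  assumes "f differentiable at y" "h differentiable at y"
  shows "pdx a (\<lambda>y. f y + h y) y = pdx a f y + pdx a h y"
proof -
  have "((\<lambda>y. f y + h y) has_derivative (\<lambda>v. frechet_derivative f (at y) v + frechet_derivative h (at y) v)) (at y)"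
    using assms by (intro has_derivative_add) (auto simp: frechet_derivative_works)
  from pdx_at[OF this] show ?thesis by (simp add: pdx_def)
qed

definition phs :: "real^'n^'n \<Rightarrow> real^'n \<Rightarrow> real^'n \<Rightarrow> real^'n \<Rightarrow> real" where
  "phs R q0 p0 y = (y - q0) \<bullet> (R *v (y - q0)) + p0 \<bullet> (y - q0)"

definition rr :: "real^'n^'n \<Rightarrow> real^'n \<Rightarrow> real^'n \<Rightarrow> real^'n \<Rightarrow> real^'n" where
  "rr R q0 p0 y = 2 *\<^sub>R (R *v (y - q0)) + p0"

lemma phs_has: "(phs R q0 p0 has_derivative (\<lambda>v. v \<bullet> (R *v (y - q0)) + (y - q0) \<bullet> (R *v v) + p0 \<bullet> v)) (at y)"
  unfolding phs_def
  by (auto intro!: derivative_eq_intros has_derivative_mv simp: algebra_simps)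

lemma inner_axis1: "(v::real^'n) \<bullet> axis a 1 = v $ a"
  by (simp add: inner_axis)

lemma phs_pdx: assumes "transpose R = R" shows "pdx a (phs R q0 p0) y = rr R q0 p0 y $ a"
proof -
  have "(y - q0) \<bullet> (R *v axis a 1) = (R *v (y - q0)) $ a"
  proof -
    have "(y - q0) \<bullet> (R *v axis a 1) = (transpose R *v (y - q0)) \<bullet> axis a 1"
      by (metis dot_lmul_matrix inner_commute vector_transpose_matrix)
    then show ?thesis using assms by (simp add: inner_axis1)
  qed
  moreover have "axis a 1 \<bullet> (R *v (y - q0)) = (R *v (y - q0)) $ a"
    by (simp add: inner_commute[of "axis a 1"] inner_axis1)
  ultimately show ?thesis using pdx_at[OF phs_has[of R q0 p0 y], of a]
    by (simp add: rr_def inner_axis1)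
qed

lemma rr_has: "((\<lambda>y. rr R q0 p0 y $ a) has_derivative (\<lambda>v. 2 * (R *v v) $ a)) (at y)"
  unfolding rr_def
  by (auto intro!: derivative_eq_intros has_derivative_mv bounded_linear.has_derivative[OF bounded_linear_vec_nth])

lemma cexp_has:
  fixes f :: "real^'n \<Rightarrow> complex"
  assumes "(f has_derivative f') (at y)"
  shows "((\<lambda>y. exp (f y)) has_derivative (\<lambda>v. exp (f y) * f' v)) (at y)"
proof -
  have "(exp has_derivative (\<lambda>h. exp (f y) * h)) (at (f y))"
    using DERIV_exp[of "f y"] unfolding has_field_derivative_def by simp
  from diff_chain_at[OF assms this] show ?thesis by (simp add: o_def)
qed

lemma pdx_const:
  fixes c :: "'b::real_normed_vector" shows "pdx a (\<lambda>y::real^'n. c) y = 0"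
  by (metis pdx_at has_derivative_const)

locale Wloc =
  fixes P :: "real^'n \<Rightarrow> complex" and R :: "real^'n^'n" and q0 p0 :: "real^'n" and \<gamma> k :: complex
  assumes dP: "\<And>y. P differentiable at y" and dP2: "\<And>a y. pdx a P differentiable at y"
    and symR: "transpose R = R"
begin

definition "Ee y = exp (k * (of_real (phs R q0 p0 y) + \<gamma>))"
definition "W y = P y * Ee y"
definition "G a y = (pdx a P y + k * of_real (rr R q0 p0 y $ a) * P y) * Ee y"

lemma Ee_has: "(Ee has_derivative (\<lambda>v. Ee y * (k * of_real (v \<bullet> (R *v (y - q0)) + (y - q0) \<bullet> (R *v v) + p0 \<bullet> v)))) (at y)"
proof -
  have "((\<lambda>y. k * (of_real (phs R q0 p0 y) + \<gamma>)) has_derivative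
     (\<lambda>v. k * (of_real (v \<bullet> (R *v (y - q0)) + (y - q0) \<bullet> (R *v v) + p0 \<bullet> v) + 0))) (at y)"
    by (intro has_derivative_mult_right has_derivative_add has_derivative_of_real phs_has has_derivative_const)
  from cexp_has[OF this] show ?thesis unfolding Ee_def by simp
qed

lemma Ee_diff: "Ee differentiable at y"
  using Ee_has differentiable_def by blast

lemma Ee_pdx: "pdx a Ee y = k * of_real (rr R q0 p0 y $ a) * Ee y"
proof -
  have "pdx a Ee y = Ee y * (k * of_real (pdx a (phs R q0 p0) y))"
    using pdx_at[OF Ee_has] pdx_at[OF phs_has] by metis
  then show ?thesis using phs_pdx[OF symR] by simp
qed

lemma rrc_has: "((\<lambda>y. complex_of_real (rr R q0 p0 y $ a)) has_derivative (\<lambda>v. of_real (2 * (R *v v) $ a))) (at y)"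
  using has_derivative_of_real[OF rr_has] .

lemma rrc_diff: "(\<lambda>y. complex_of_real (rr R q0 p0 y $ a)) differentiable at y"
  using rrc_has differentiable_def by blast

lemma rrc_pdx: "pdx a (\<lambda>y. complex_of_real (rr R q0 p0 y $ a)) y = of_real (2 * R $ a $ a)"
  using pdx_at[OF rrc_has] by (simp add: mv_axis)

lemma W_diff: "W differentiable at y"
  unfolding W_def using dP Ee_diff by (intro differentiable_mult) auto

lemma W_pdx: "pdx a W = G a"
proof
  fix y
  show "pdx a W y = G a y"
    unfolding W_def G_def
    by (simp add: pdx_mult[OF dP Ee_diff] Ee_pdx algebra_simps)
qed

lemma d1: "(\<lambda>y. k * complex_of_real (rr R q0 p0 y $ a)) differentiable at y"
    using differentiable_mult[OF differentiable_const rrc_diff] .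
lemma d2: "(\<lambda>y. k * complex_of_real (rr R q0 p0 y $ a) * P y) differentiable at y"
    using differentiable_mult[OF d1 dP] .
lemma d3: "(\<lambda>y. pdx a P y + k * complex_of_real (rr R q0 p0 y $ a) * P y) differentiable at y"
    using differentiable_add[OF dP2 d2] .

lemma G_diff: "G a differentiable at y"
  unfolding G_def using differentiable_mult[OF d3 Ee_diff] .

lemma G_pdx: "pdx a (G a) y =
   (pdx a (pdx a P) y + k * of_real (2 * R $ a $ a) * P y + k * of_real (rr R q0 p0 y $ a) * pdx a P y) * Ee y
   + (pdx a P y + k * of_real (rr R q0 p0 y $ a) * P y) * (k * of_real (rr R q0 p0 y $ a) * Ee y)"
proof -
  have p1: "pdx a (\<lambda>y. k * complex_of_real (rr R q0 p0 y $ a)) y = k * of_real (2 * R $ a $ a)"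
    using pdx_mult[OF differentiable_const[of k] rrc_diff, where a=a] by (simp add: pdx_const rrc_pdx)
  have p2: "pdx a (\<lambda>y. k * complex_of_real (rr R q0 p0 y $ a) * P y) y
     = k * of_real (2 * R $ a $ a) * P y + k * of_real (rr R q0 p0 y $ a) * pdx a P y"
    using pdx_mult[OF d1 dP, where a=a] p1 by simp
  have p3: "pdx a (\<lambda>y. pdx a P y + k * complex_of_real (rr R q0 p0 y $ a) * P y) y
     = pdx a (pdx a P) y + (k * of_real (2 * R $ a $ a) * P y + k * of_real (rr R q0 p0 y $ a) * pdx a P y)"
    using pdx_add[OF dP2 d2, where a=a] p2 by simp
  show ?thesis
    unfolding G_def using pdx_mult[OF d3 Ee_diff, where a=a] p3 Ee_pdx by (simp add: algebra_simps)
qed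

lemma trace_hess_W: "trace (hess W y) = (\<Sum>a\<in>UNIV. pdx a (G a) y)"
  by (simp add: trace_def hess_def W_pdx)

lemma W_hess: fixes M :: "real^'n^'n" shows "hess (\<lambda>z. W (x0 + M *v z)) z = cmat (transpose M) ** hess W (x0 + M *v z) ** cmat M"
  by (rule aff_hess[OF W_diff]) (simp add: W_pdx G_diff)

end

lemma minv: assumes "invertible (A::real^'n^'n)"
  shows "A ** matrix_inv A = mat 1" "matrix_inv A ** A = mat 1"
proof -
  have "\<exists>A'. A ** A' = mat 1 \<and> A' ** A = mat 1" using assms invertible_def by blast
  then have "A ** matrix_inv A = mat 1 \<and> matrix_inv A ** A = mat 1"
    unfolding matrix_inv_def by (rule someI_ex)
  then show "A ** matrix_inv A = mat 1" "matrix_inv A ** A = mat 1" by auto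
qed

lemma minv_unique: assumes "invertible (A::real^'n^'n)" "X ** A = mat 1"
  shows "X = matrix_inv A"
proof -
  have "X = X ** (A ** matrix_inv A)" using minv(1)[OF assms(1)] by simp
  also have "\<dots> = (X ** A) ** matrix_inv A" by (simp add: matrix_mul_assoc)
  finally show ?thesis using assms(2) by simp
qed

lemma minv_transpose: assumes "invertible (A::real^'n^'n)"
  shows "matrix_inv (transpose A) = transpose (matrix_inv A)"
proof -
  have inv: "invertible (transpose A)" using assms transpose_invertible by blast
  have "transpose (matrix_inv A) ** transpose A = mat 1"
    by (metis matrix_transpose_mul minv(1)[OF assms] transpose_mat)
  then show ?thesis using minv_unique[OF inv] by metis
qed

lemma prod_diff:
  fixes f :: "'i \<Rightarrow> 'a::real_normed_vector \<Rightarrow> real"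
  assumes "finite I" "\<And>i. i \<in> I \<Longrightarrow> f i differentiable (at x within S)"
  shows "(\<lambda>x. \<Prod>i\<in>I. f i x) differentiable (at x within S)"
  using assms
proof (induction I rule: finite_induct)
  case empty then show ?case by simp
next
  case (insert a F)
  then show ?case by (simp add: differentiable_mult)
qed

lemma det_diff:
  fixes F :: "real \<Rightarrow> real^'n^'n"
  assumes "\<And>i j. (\<lambda>s. F s $ i $ j) differentiable (at t within S)"
  shows "(\<lambda>s. det (F s)) differentiable (at t within S)"
  unfolding det_def
proof (intro differentiable_sum[OF finite_permutations[OF finite_class.finite_UNIV]] ballI)
  fix p :: "'n \<Rightarrow> 'n"
  show "(\<lambda>x. real_of_int (sign p) * (\<Prod>i\<in>UNIV. F x $ i $ p i)) differentiable at t within S"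
    by (rule differentiable_mult[OF differentiable_const prod_diff[OF finite_class.finite_UNIV assms]])
qed

lemma entry_diff:
  fixes F :: "real \<Rightarrow> real^'n^'m"
  assumes "F differentiable (at t within S)"
  shows "(\<lambda>s. F s $ i $ j) differentiable (at t within S)"
proof -
  have "bounded_linear (\<lambda>M::real^'n^'m. M $ i $ j)"
    using bounded_linear_compose[OF bounded_linear_vec_nth bounded_linear_vec_nth] .
  from bounded_linear.has_derivative[OF this] show ?thesis using assms
    unfolding differentiable_def by blast
qed

lemma vec_diff:
  fixes f :: "real \<Rightarrow> real^'n"
  assumes "\<And>k. (\<lambda>s. f s $ k) differentiable (at t within S)"
  shows "f differentiable (at t within S)"
proof -
  have "f s = (\<Sum>k\<in>UNIV. f s $ k *\<^sub>R axis k 1)" for s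
    using basis_expansion[of "f s"] by (simp add: scalar_mult_eq_scaleR)
  then have e: "f = (\<lambda>s. \<Sum>k\<in>UNIV. f s $ k *\<^sub>R axis k 1)" by (rule ext)
  show ?thesis
    by (subst e) (intro differentiable_sum[OF finite_class.finite_UNIV] ballI differentiable_scaleR assms differentiable_const)
qed

lemma minv_apply_diff:
  fixes B :: "real \<Rightarrow> real^'n^'n"
  assumes "B differentiable (at t within S)" "\<forall>s\<in>S. invertible (B s)" "t \<in> S"
  shows "(\<lambda>s. matrix_inv (B s) *v b) differentiable (at t within S)"
proof -
  have d0: "det (B s) \<noteq> 0" if "s \<in> S" for s using assms(2) that invertible_det_nz by blast
  have sol: "B s *v (matrix_inv (B s) *v b) = b" if "s \<in> S" for s
    using minv(1)[OF assms(2)[rule_format, OF that]] by (simp add: matrix_vector_mul_assoc)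
  define g where "g s = (\<chi> k. det(\<chi> i j. if j=k then b$i else B s$i$j) / det (B s))" for s
  have eq: "matrix_inv (B s) *v b = g s" if "s \<in> S" for s
    using cramer[OF d0[OF that]] sol[OF that] unfolding g_def by blast
  have "g differentiable (at t within S)"
  proof (rule vec_diff)
    fix k
    have "(\<lambda>s. det(\<chi> i j. if j=k then b$i else B s$i$j)) differentiable (at t within S)"
      apply (rule det_diff)
      subgoal for i j by (cases "j = k") (auto intro: entry_diff[OF assms(1)])
      done
    moreover have "(\<lambda>s. det (B s)) differentiable (at t within S)"
      by (rule det_diff) (auto intro: entry_diff[OF assms(1)])
    ultimately show "(\<lambda>s. g s $ k) differentiable (at t within S)"
      unfolding g_def using d0[OF assms(3)] by (simp add: differentiable_divide)
  qed
  then obtain g' where "(g has_derivative g') (at t within S)" unfolding differentiable_def by blast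
  then have "((\<lambda>s. matrix_inv (B s) *v b) has_derivative g') (at t within S)"
    by (rule has_derivative_transform_within[where d=1]) (use assms(3) eq in auto)
  then show ?thesis unfolding differentiable_def by blast
qed

lemma Aq_p: "p \<bullet> Aq A q \<xi> = (1/2) * (\<xi> \<bullet> (hessA_dot A q p *v \<xi>))"
proof -
  let ?H = "\<lambda>j l l'. hess (\<lambda>y. A y $ j) q $ l $ l'"
  have "p \<bullet> Aq A q \<xi> = (\<Sum>j\<in>UNIV. \<Sum>l\<in>UNIV. \<Sum>l'\<in>UNIV. (1/2) * (p$j * ?H j l l' * \<xi>$l * \<xi>$l'))"
    unfolding Aq_def inner_vec_def by (simp add: sum_distrib_left mult_ac)
  also have "\<dots> = (\<Sum>l\<in>UNIV. \<Sum>j\<in>UNIV. \<Sum>l'\<in>UNIV. (1/2) * (p$j * ?H j l l' * \<xi>$l * \<xi>$l'))"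
    by (rule sum.swap)
  also have "\<dots> = (\<Sum>l\<in>UNIV. \<Sum>l'\<in>UNIV. \<Sum>j\<in>UNIV. (1/2) * (p$j * ?H j l l' * \<xi>$l * \<xi>$l'))"
    by (rule sum.cong[OF refl], rule sum.swap)
  also have "\<dots> = (1/2) * (\<xi> \<bullet> (hessA_dot A q p *v \<xi>))"
    unfolding hessA_dot_def inner_vec_def matrix_vector_mult_def
    by (simp add: sum_distrib_left sum_distrib_right mult_ac)
  finally show ?thesis .
qed

lemma inner_mv_T: "x \<bullet> (transpose (R::real^'n^'n) *v y) = (R *v x) \<bullet> y"
proof -
  have "x \<bullet> (transpose R *v y) = (y v* R) \<bullet> x" by (simp add: inner_commute)
  also have "\<dots> = y \<bullet> (R *v x)" by (rule dot_lmul_matrix)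
  finally show ?thesis by (simp add: inner_commute)
qed

lemma inner_mv_sym: "transpose R = R \<Longrightarrow> x \<bullet> ((R::real^'n^'n) *v y) = (R *v x) \<bullet> y"
  using inner_mv_T[of x R y] by simp

lemma real_identity:
  fixes R I J HU HAp :: "real^'n^'n" and \<xi> p q gU :: "real^'n" and A :: "real^'n \<Rightarrow> real^'n" and U :: "real^'n \<Rightarrow> real"
  assumes symR: "transpose R = R"
    and xd: "xd = 2 *\<^sub>R (R *v \<xi>) - J *v \<xi>"
    and Rd: "Rd = (-2) *\<^sub>R (R ** R - I ** I) - (1/2) *\<^sub>R HU + transpose J ** R + R ** J + (1/2) *\<^sub>R HAp"
    and pd: "pd = transpose J *v p - gU"
    and a1: "a1 = A (\<xi> + q) - A q - J *v \<xi>"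
    and Aqp: "p \<bullet> aq = (1/2) * (\<xi> \<bullet> (HAp *v \<xi>))"
    and ur: "ur = U (\<xi> + q) - U q - \<xi> \<bullet> gU - (1/2) * (\<xi> \<bullet> (HU *v \<xi>))"
    and r: "r = 2 *\<^sub>R (R *v \<xi>) + p"
  shows "xd \<bullet> (R *v \<xi>) + \<xi> \<bullet> (Rd *v \<xi> + R *v xd) + pd \<bullet> \<xi> + p \<bullet> xd + ((1/2) * (norm p)\<^sup>2 - U q) + U (\<xi> + q)
    = (1/2) * (r \<bullet> r) + 2 * (\<xi> \<bullet> ((I ** I) *v \<xi>)) + r \<bullet> a1 + (ur - 2 * (a1 \<bullet> (R *v \<xi>)) - (a1 - aq) \<bullet> p)"
proof -
  define u where "u = R *v \<xi>"
  define j where "j = J *v \<xi>"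
  have s1: "\<xi> \<bullet> (R *v y) = u \<bullet> y" for y unfolding u_def using inner_mv_sym[OF symR] .
  have s2: "\<xi> \<bullet> ((R ** J) *v \<xi>) = u \<bullet> j"
    unfolding matrix_vector_mul_assoc[symmetric] j_def by (rule s1)
  have s3: "\<xi> \<bullet> ((transpose J ** R) *v \<xi>) = u \<bullet> j"
    unfolding matrix_vector_mul_assoc[symmetric] inner_mv_T u_def j_def by (rule inner_commute)
  have s4: "\<xi> \<bullet> ((R ** R) *v \<xi>) = u \<bullet> u"
    unfolding matrix_vector_mul_assoc[symmetric] using s1 u_def by simp
  have s5: "(transpose J *v p) \<bullet> \<xi> = p \<bullet> j"
    unfolding j_def by (metis inner_commute inner_mv_T)
  have n: "(norm p)\<^sup>2 = p \<bullet> p" by (simp add: power2_norm_eq_inner)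
  have Rd': "\<xi> \<bullet> (Rd *v \<xi>) = -2 * (u \<bullet> u) + 2 * (\<xi> \<bullet> ((I ** I) *v \<xi>))
      - (1/2) * (\<xi> \<bullet> (HU *v \<xi>)) + 2 * (u \<bullet> j) + (1/2) * (\<xi> \<bullet> (HAp *v \<xi>))"
    unfolding Rd using s2 s3 s4
    by (simp add: matrix_vector_mult_add_rdistrib matrix_vector_mult_diff_rdistrib
        scaleR_matrix_vector_assoc[symmetric] inner_add_right inner_diff_right algebra_simps)
  have e1: "xd \<bullet> u = 2 * (u \<bullet> u) - u \<bullet> j"
    unfolding xd u_def[symmetric] j_def[symmetric] by (simp add: inner_diff_left inner_commute[of j u])
  have e2: "\<xi> \<bullet> (R *v xd) = 2 * (u \<bullet> u) - u \<bullet> j"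
    unfolding s1 xd u_def[symmetric] j_def[symmetric] by (simp add: inner_diff_right)
  have e3: "pd \<bullet> \<xi> = p \<bullet> j - \<xi> \<bullet> gU"
    unfolding pd inner_diff_left s5 by (simp add: inner_commute[of gU \<xi>])
  have e4: "p \<bullet> xd = 2 * (u \<bullet> p) - p \<bullet> j"
    unfolding xd u_def[symmetric] j_def[symmetric] by (simp add: inner_diff_right inner_commute)
  have e5: "r \<bullet> r = 4 * (u \<bullet> u) + 4 * (u \<bullet> p) + p \<bullet> p"
    unfolding r u_def[symmetric] by (simp add: inner_add_left inner_add_right inner_commute)
  have e6: "r \<bullet> a1 = 2 * (a1 \<bullet> u) + a1 \<bullet> p"
    unfolding r u_def[symmetric] by (simp add: inner_add_right inner_commute)
  have e7: "(a1 - aq) \<bullet> p = a1 \<bullet> p - (1/2) * (\<xi> \<bullet> (HAp *v \<xi>))"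
    unfolding inner_diff_left inner_commute[of aq p] Aqp by simp
  have e8: "\<xi> \<bullet> (Rd *v \<xi> + R *v xd) = \<xi> \<bullet> (Rd *v \<xi>) + \<xi> \<bullet> (R *v xd)"
    by (simp add: inner_add_right)
  show ?thesis
    unfolding e8 e2 e3 e4 e5 e6 e7 Rd' n ur u_def[symmetric] e1
    by (simp add: algebra_simps)
qed

definition Sg :: "('n::finite \<Rightarrow> complex) \<Rightarrow> real^'n \<Rightarrow> complex" where
  "Sg g v = (\<Sum>a\<in>UNIV. g a * of_real (v $ a))"

lemma Sg_add: "Sg g (u + v) = Sg g u + Sg g v"
  unfolding Sg_def by (simp add: distrib_left sum.distrib)

lemma complex_identity:
  fixes \<epsilon> :: real and g Hd :: "'n::finite \<Rightarrow> complex" and Rdiag :: "'n \<Rightarrow> real"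
    and Xd r a1 Ax :: "real^'n"
  assumes eps: "\<epsilon> > 0"
    and k: "k = - (\<i> / of_real \<epsilon>)"
    and schr: "\<i> * of_real \<epsilon> * \<psi>t = - of_real (\<epsilon>\<^sup>2 / 2) * (\<Sum>a\<in>UNIV. Hd a)
          + \<i> * of_real \<epsilon> * (\<Sum>j\<in>UNIV. of_real (Ax $ j) * g j) + of_real Ux * \<psi>0"
    and vec: "Xd + Ax = r + a1"
    and real: "\<Phi>d + ReG + Ux = (1/2) * (r \<bullet> r) + 2 * (\<epsilon> * Q) + r \<bullet> a1 + Z"
    and gd: "\<gamma>d = of_real ReG + \<i> * of_real \<epsilon> * of_real (\<Sum>a\<in>UNIV. Rdiag a)"
  shows "((\<Sum>a\<in>UNIV. Xd $ a *\<^sub>R g a) + \<psi>t) * E + \<psi>0 * (E * (k * (of_real \<Phi>d + \<gamma>d)))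
    = \<i> / 2 * (of_real \<epsilon> * (\<Sum>a\<in>UNIV. (Hd a + k * of_real (2 * Rdiag a) * \<psi>0 + k * of_real (r $ a) * g a) * E
                 + (g a + k * of_real (r $ a) * \<psi>0) * (k * of_real (r $ a) * E)))
      - 2 * \<i> * of_real Q * (\<psi>0 * E)
      + (\<Sum>a\<in>UNIV. (g a + k * of_real (r $ a) * \<psi>0) * E * of_real (a1 $ a))
      + 1 / (\<i> * of_real \<epsilon>) * of_real Z * (\<psi>0 * E)"
proof -
  let ?Lap = "\<Sum>a\<in>UNIV. Hd a"
  let ?tr = "\<Sum>a\<in>UNIV. Rdiag a"
  have ke: "k * (\<i> * of_real \<epsilon>) = 1" using eps k by (simp add: field_simps)
  have ki: "1 / (\<i> * of_real \<epsilon>) = k" using eps k by (simp add: field_simps)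
  have s1: "(\<Sum>a\<in>UNIV. Xd $ a *\<^sub>R g a) = Sg g Xd"
    unfolding Sg_def by (simp add: scaleR_conv_of_real mult.commute)
  have s2: "(\<Sum>j\<in>UNIV. of_real (Ax $ j) * g j) = Sg g Ax"
    unfolding Sg_def by (simp add: mult.commute)
  have psit: "\<psi>t = k * (- of_real (\<epsilon>\<^sup>2 / 2) * ?Lap) + Sg g Ax + k * (of_real Ux * \<psi>0)"
  proof -
    have "k * (\<i> * of_real \<epsilon> * \<psi>t) = k * (- of_real (\<epsilon>\<^sup>2 / 2) * ?Lap + \<i> * of_real \<epsilon> * Sg g Ax + of_real Ux * \<psi>0)"
      using schr s2 by simp
    then have "k * (\<i> * of_real \<epsilon> * \<psi>t) = k * (- of_real (\<epsilon>\<^sup>2 / 2) * ?Lap) + k * (\<i> * of_real \<epsilon>) * Sg g Ax + k * (of_real Ux * \<psi>0)"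
      by (simp only: distrib_left mult.assoc)
    then show ?thesis using ke by (simp add: mult.assoc[symmetric])
  qed
  have rr: "(\<Sum>a\<in>UNIV. of_real (r $ a) * of_real (r $ a)) = (of_real (r \<bullet> r) :: complex)"
    by (simp add: inner_vec_def)
  have ra: "(\<Sum>a\<in>UNIV. of_real (r $ a) * of_real (a1 $ a)) = (of_real (r \<bullet> a1) :: complex)"
    by (simp add: inner_vec_def)
  have s3: "(\<Sum>a\<in>UNIV. (Hd a + k * of_real (2 * Rdiag a) * \<psi>0 + k * of_real (r $ a) * g a) * E
                 + (g a + k * of_real (r $ a) * \<psi>0) * (k * of_real (r $ a) * E))
      = ?Lap * E + (2 * k * \<psi>0 * E) * of_real ?tr + (2 * k * E) * Sg g r + (k * k * \<psi>0 * E) * of_real (r \<bullet> r)"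
  proof -
    have "(\<Sum>a\<in>UNIV. (Hd a + k * of_real (2 * Rdiag a) * \<psi>0 + k * of_real (r $ a) * g a) * E
                 + (g a + k * of_real (r $ a) * \<psi>0) * (k * of_real (r $ a) * E))
       = (\<Sum>a\<in>UNIV. Hd a * E + (2 * k * \<psi>0 * E) * of_real (Rdiag a) + (2 * k * E) * (g a * of_real (r $ a))
            + (k * k * \<psi>0 * E) * (of_real (r $ a) * of_real (r $ a)))"
      by (rule sum.cong) (simp_all add: algebra_simps)
    also have "\<dots> = ?Lap * E + (2 * k * \<psi>0 * E) * of_real ?tr + (2 * k * E) * Sg g r + (k * k * \<psi>0 * E) * of_real (r \<bullet> r)"
      unfolding sum.distrib Sg_def rr[symmetric] by (simp add: sum_distrib_left sum_distrib_right)
    finally show ?thesis .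
  qed
  have s4: "(\<Sum>a\<in>UNIV. (g a + k * of_real (r $ a) * \<psi>0) * E * of_real (a1 $ a))
      = E * Sg g a1 + (k * \<psi>0 * E) * of_real (r \<bullet> a1)"
  proof -
    have "(\<Sum>a\<in>UNIV. (g a + k * of_real (r $ a) * \<psi>0) * E * of_real (a1 $ a))
      = (\<Sum>a\<in>UNIV. E * (g a * of_real (a1 $ a)) + (k * \<psi>0 * E) * (of_real (r $ a) * of_real (a1 $ a)))"
      by (rule sum.cong) (simp_all add: algebra_simps)
    also have "\<dots> = E * Sg g a1 + (k * \<psi>0 * E) * of_real (r \<bullet> a1)"
      unfolding sum.distrib Sg_def ra[symmetric] by (simp add: sum_distrib_left)
    finally show ?thesis .
  qed
  have sv: "Sg g Xd + Sg g Ax = Sg g r + Sg g a1"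
    using vec by (metis Sg_add)
  have sv': "Sg g Xd = Sg g r + Sg g a1 - Sg g Ax" using sv by (simp add: algebra_simps)
  have phi: "(of_real \<Phi>d :: complex) = of_real ((1/2) * (r \<bullet> r) + 2 * (\<epsilon> * Q) + r \<bullet> a1 + Z) - of_real ReG - of_real Ux"
    using real by (simp add: algebra_simps flip: of_real_add of_real_diff)
  show ?thesis
    unfolding s1 s3 s4 psit ki phi gd sv'
    using eps
    by (simp add: k field_simps power2_eq_square)
qed

lemma mv_neg: "(A::real^'n^'m) *v (- x) = - (A *v x)"
  by (simp add: vec_eq_iff matrix_vector_mult_def sum_negf)

lemma hvd_mv:
  fixes M :: "real \<Rightarrow> real^'n^'n" and X :: "real \<Rightarrow> real^'n"
  assumes "(M has_vector_derivative M') (at t within S)" "(X has_vector_derivative X') (at t within S)"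
  shows "((\<lambda>s. M s *v X s) has_vector_derivative (M t *v X' + M' *v X t)) (at t within S)"
proof -
  have "((\<lambda>s. M s *v X s) has_derivative (\<lambda>h. M t *v (h *\<^sub>R X') + (h *\<^sub>R M') *v X t)) (at t within S)"
    using has_derivative_mv[OF assms(1)[unfolded has_vector_derivative_def] assms(2)[unfolded has_vector_derivative_def]] .
  moreover have "(\<lambda>h. M t *v (h *\<^sub>R X') + (h *\<^sub>R M') *v X t) = (\<lambda>h. h *\<^sub>R (M t *v X' + M' *v X t))"
    by (rule ext) (simp add: matrix_vector_mult_scaleR scaleR_matrix_vector_assoc[symmetric] scaleR_add_right)
  ultimately show ?thesis unfolding has_vector_derivative_def by simp
qed

lemma minv_vec_deriv:
  fixes B :: "real \<Rightarrow> real^'n^'n"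
  assumes T: "T > 0" and t: "t \<in> {0..T}" and dB: "(B has_vector_derivative B') (at t within {0..T})"
    and inv: "\<forall>s\<in>{0..T}. invertible (B s)"
  shows "((\<lambda>s. matrix_inv (B s) *v b) has_vector_derivative
           (- (matrix_inv (B t) *v (B' *v (matrix_inv (B t) *v b))))) (at t within {0..T})"
proof -
  let ?X = "\<lambda>s. matrix_inv (B s) *v b"
  have "?X differentiable (at t within {0..T})"
    by (rule minv_apply_diff) (use dB inv t in \<open>auto simp: differentiable_def has_vector_derivative_def\<close>)
  then have dX: "(?X has_vector_derivative vector_derivative ?X (at t within {0..T})) (at t within {0..T})"
    using vector_derivative_works by blast
  define X' where "X' = vector_derivative ?X (at t within {0..T})"
  have 1: "((\<lambda>s. B s *v ?X s) has_vector_derivative (B t *v X' + B' *v ?X t)) (at t within {0..T})"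
    using hvd_mv[OF dB dX] unfolding X'_def .
  have 2: "((\<lambda>s. B s *v ?X s) has_vector_derivative 0) (at t within {0..T})"
  proof (rule has_vector_derivative_transform_within[OF has_vector_derivative_const[of b] zero_less_one t])
    fix s assume "s \<in> {0..T}"
    then show "b = B s *v ?X s" using minv(1)[OF inv[rule_format]] by (simp add: matrix_vector_mul_assoc)
  qed
  have "B t *v X' + B' *v ?X t = 0"
    using vector_derivative_within_closed_interval[OF T t 1] vector_derivative_within_closed_interval[OF T t 2] by simp
  then have "B t *v X' = - (B' *v ?X t)" by (simp add: eq_neg_iff_add_eq_0)
  then have "matrix_inv (B t) *v (B t *v X') = - (matrix_inv (B t) *v (B' *v ?X t))"
    by (simp add: mv_neg)
  then have "X' = - (matrix_inv (B t) *v (B' *v ?X t))"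
    using minv(2)[OF inv[rule_format, OF t]] by (simp add: matrix_vector_mul_assoc)
  then show ?thesis using dX unfolding X'_def by simp
qed

lemma linear_cplx: "linear (\<lambda>z::(real^'n^'n) \<times> (real^'n^'n). cplx_mat (fst z) (snd z))"
  by (rule linearI) (auto simp: cplx_mat_def vec_eq_iff complex_eq_iff)

lemma bl_cplx: "bounded_linear (\<lambda>z::(real^'n^'n) \<times> (real^'n^'n). cplx_mat (fst z) (snd z))"
  using linear_cplx linear_conv_bounded_linear by blast

lemma cplx_scale: "cplx_mat (h *\<^sub>R R) (h *\<^sub>R I) = h *\<^sub>R cplx_mat R I"
  by (auto simp: cplx_mat_def vec_eq_iff complex_eq_iff)

lemma cplx_deriv:
  fixes aR aI :: "real \<Rightarrow> real^'n^'n"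
  assumes "(aR has_vector_derivative R') (at t within S)" "(aI has_vector_derivative I') (at t within S)"
  shows "((\<lambda>s. cplx_mat (aR s) (aI s)) has_vector_derivative cplx_mat R' I') (at t within S)"
proof -
  have "((\<lambda>s. (aR s, aI s)) has_derivative (\<lambda>h. (h *\<^sub>R R', h *\<^sub>R I'))) (at t within S)"
    using has_derivative_Pair[OF assms(1)[unfolded has_vector_derivative_def] assms(2)[unfolded has_vector_derivative_def]] .
  from bounded_linear.has_derivative[OF bl_cplx this]
  show ?thesis unfolding has_vector_derivative_def by (simp add: cplx_scale)
qed

lemma Re_cplx_mult: "(\<chi> i j. Re ((cplx_mat R I ** cplx_mat R2 I2) $ i $ j)) = R ** R2 - I ** I2"
  by (simp add: vec_eq_iff cplx_mat_def matrix_matrix_mult_def Re_sum sum_subtractf)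

lemma Re_cmat_mult1: "(\<chi> i j. Re ((cmat M ** cplx_mat R I) $ i $ j)) = M ** R"
  by (simp add: vec_eq_iff cplx_mat_def cmat_def matrix_matrix_mult_def Re_sum)

lemma Re_cmat_mult2: "(\<chi> i j. Re ((cplx_mat R I ** cmat M) $ i $ j)) = R ** M"
  by (simp add: vec_eq_iff cplx_mat_def cmat_def matrix_matrix_mult_def Re_sum)

lemma alpha_real:
  fixes aR aI :: "real \<Rightarrow> real^'n^'n"
  assumes T: "T > 0" and t: "t \<in> {0..T}"
    and dR: "(aR has_vector_derivative R') (at t within {0..T})" and dI: "(aI has_vector_derivative I') (at t within {0..T})"
    and ode: "vector_derivative (\<lambda>s. cplx_mat (aR s) (aI s)) (at t within {0..T})
        = (let \<alpha> = cplx_mat (aR t) (aI t) in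
             (-2) *\<^sub>R (\<alpha> ** \<alpha>) - (1/2) *\<^sub>R cmat HU
             + cmat (transpose J) ** \<alpha> + \<alpha> ** cmat J
             + (1/2) *\<^sub>R cmat HAp)"
  shows "R' = (-2) *\<^sub>R (aR t ** aR t - aI t ** aI t) - (1/2) *\<^sub>R HU + transpose J ** aR t + aR t ** J + (1/2) *\<^sub>R HAp"
proof -
  have e: "cplx_mat R' I' = (let \<alpha> = cplx_mat (aR t) (aI t) in
             (-2) *\<^sub>R (\<alpha> ** \<alpha>) - (1/2) *\<^sub>R cmat HU
             + cmat (transpose J) ** \<alpha> + \<alpha> ** cmat J
             + (1/2) *\<^sub>R cmat HAp)"
    using vector_derivative_within_closed_interval[OF T t cplx_deriv[OF dR dI]] ode by simp
  have "R' = (\<chi> i j. Re (cplx_mat R' I' $ i $ j))"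
    by (simp add: vec_eq_iff cplx_mat_def)
  also have "\<dots> = (-2) *\<^sub>R (\<chi> i j. Re ((cplx_mat (aR t) (aI t) ** cplx_mat (aR t) (aI t)) $ i $ j)) - (1/2) *\<^sub>R HU
      + (\<chi> i j. Re ((cmat (transpose J) ** cplx_mat (aR t) (aI t)) $ i $ j))
      + (\<chi> i j. Re ((cplx_mat (aR t) (aI t) ** cmat J) $ i $ j)) + (1/2) *\<^sub>R HAp"
    unfolding e Let_def by (simp add: vec_eq_iff cmat_def)
  also have "\<dots> = (-2) *\<^sub>R (aR t ** aR t - aI t ** aI t) - (1/2) *\<^sub>R HU + transpose J ** aR t + aR t ** J + (1/2) *\<^sub>R HAp"
    unfolding Re_cplx_mult Re_cmat_mult1 Re_cmat_mult2 ..
  finally show ?thesis .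
qed

lemmas hvd_inner = bounded_bilinear.has_vector_derivative[OF bounded_bilinear_inner]
lemmas hvd_ofreal = bounded_linear.has_vector_derivative[OF bounded_linear_of_real]

lemma hvd_cexp:
  fixes f :: "real \<Rightarrow> complex"
  assumes "(f has_vector_derivative f') (at t within S)"
  shows "((\<lambda>s. exp (f s)) has_vector_derivative (exp (f t) * f')) (at t within S)"
proof -
  have "(exp has_derivative (\<lambda>h. exp (f t) * h)) (at (f t))"
    using DERIV_exp[of "f t"] unfolding has_field_derivative_def by simp
  from diff_chain_within[OF assms[unfolded has_vector_derivative_def] has_derivative_at_withinI[OF this]]
  show ?thesis unfolding has_vector_derivative_def o_def by (simp add: algebra_simps scaleR_conv_of_real)
qed

lemma cmat_mult: "cmat ((M::real^'n^'m) ** (N::real^'k^'n)) = cmat M ** cmat N"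
  by (simp add: vec_eq_iff cmat_def matrix_matrix_mult_def)

lemma trace_conv:
  fixes M B :: "real^'n^'n" and H :: "complex^'n^'n"
  assumes "M ** B = c *\<^sub>R mat 1"
  shows "trace (cmat (transpose B) ** (cmat (transpose M) ** H ** cmat M) ** cmat B) = of_real (c * c) * trace H"
proof -
  have "cmat (transpose B) ** (cmat (transpose M) ** H ** cmat M) ** cmat B
      = (cmat (transpose B) ** cmat (transpose M)) ** H ** (cmat M ** cmat B)"
    by (simp add: matrix_mul_assoc)
  also have "\<dots> = cmat (transpose (M ** B)) ** H ** cmat (M ** B)"
    by (simp add: cmat_mult matrix_transpose_mul)
  also have "\<dots> = cmat (c *\<^sub>R mat 1) ** H ** cmat (c *\<^sub>R mat 1)"
    using assms by (simp add: transpose_scalar transpose_mat)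
  finally have e: "cmat (transpose B) ** (cmat (transpose M) ** H ** cmat M) ** cmat B = cmat (c *\<^sub>R mat 1) ** H ** cmat (c *\<^sub>R mat 1)" .
  have cm: "cmat (c *\<^sub>R mat 1) $ i $ k = (if i = k then of_real c else 0)" for i k
    by (simp add: cmat_def mat_def)
  have d1: "x * (if P then a else 0) = (if P then x * a else (0::complex))" for x a P by simp
  have d2: "(if P then a else 0) * x = (if P then a * x else (0::complex))" for x a P by simp
  have "(cmat (c *\<^sub>R mat 1) ** H ** cmat (c *\<^sub>R mat 1)) $ i $ i = of_real c * H $ i $ i * of_real c" for i
    unfolding matrix_matrix_mult_def by (simp add: cm d1 d2 sum.delta sum.delta')
  then show ?thesis unfolding e trace_def by (simp add: sum_distrib_left mult_ac)
qed

lemma grad_conv: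
  fixes M :: "real^'n^'n" and G :: "'n \<Rightarrow> complex"
  shows "(\<Sum>j\<in>UNIV. (\<Sum>a\<in>UNIV. M$a$j *\<^sub>R G a) * of_real (v $ j)) = (\<Sum>a\<in>UNIV. G a * of_real ((M *v v) $ a))"
proof -
  have "(\<Sum>j\<in>UNIV. (\<Sum>a\<in>UNIV. M$a$j *\<^sub>R G a) * of_real (v $ j)) = (\<Sum>j\<in>UNIV. \<Sum>a\<in>UNIV. G a * (of_real (M$a$j) * of_real (v $ j)))"
    by (rule sum.cong[OF refl]) (simp add: scaleR_conv_of_real sum_distrib_right sum_distrib_left mult_ac)
  also have "\<dots> = (\<Sum>a\<in>UNIV. \<Sum>j\<in>UNIV. G a * (of_real (M$a$j) * of_real (v $ j)))"
    by (rule sum.swap)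
  also have "\<dots> = (\<Sum>a\<in>UNIV. G a * of_real ((M *v v) $ a))"
    by (simp add: matrix_vector_mult_def sum_distrib_left)
  finally show ?thesis .
qed

lemma cinf_hvd:
  fixes f :: "real \<Rightarrow> 'b::real_normed_vector"
  assumes "C_inf_on {0..T} f" "t \<in> {0..T}"
  shows "(f has_vector_derivative vector_derivative f (at t within {0..T})) (at t within {0..T})"
  using cinf_diff[OF assms(1)] assms(2) differentiable_on_def vector_derivative_works by blast

lemma mm_scaleR2: "(A::real^'n^'m) ** (c *\<^sub>R (B::real^'k^'n)) = c *\<^sub>R (A ** B)"
  by (simp add: vec_eq_iff matrix_matrix_mult_def sum_distrib_left mult_ac)

lemma mm_scaleR: "(c *\<^sub>R (A::real^'n^'m)) ** (B::real^'k^'n) = c *\<^sub>R (A ** B)"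
  by (simp add: vec_eq_iff matrix_matrix_mult_def sum_distrib_left mult.assoc)

theorem mainTheorem1:
  fixes \<epsilon> T :: real
    and A :: "real^'n \<Rightarrow> real^'n" and U :: "real^'n \<Rightarrow> real"
    and \<psi> :: "real^'n \<Rightarrow> real \<Rightarrow> complex"
    and q p :: "real \<Rightarrow> real^'n"
    and \<alpha>R \<alpha>I B :: "real \<Rightarrow> real^'n^'n"
    and \<gamma>2 :: "real \<Rightarrow> complex"
    and w :: "real^'n \<Rightarrow> real \<Rightarrow> complex"
  assumes eps: "\<epsilon> > 0" and Tpos: "T > 0"
    and A_smooth: "C_inf_on UNIV A" and U_smooth: "C_inf_on UNIV U"
    and psi_smooth: "C_inf_on (UNIV \<times> {0..T}) (\<lambda>(x, t). \<psi> x t)"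
    and schroedinger: "\<forall>x. \<forall>t\<in>{0..T}.
        \<i> * of_real \<epsilon> * vector_derivative (\<lambda>s. \<psi> x s) (at t within {0..T})
        = - of_real (\<epsilon>\<^sup>2 / 2) * laplacian (\<lambda>y. \<psi> y t) x
          + \<i> * of_real \<epsilon> * (\<Sum>j\<in>UNIV. of_real (A x $ j) * pdx j (\<lambda>y. \<psi> y t) x)
          + of_real (U x) * \<psi> x t"
    and q_smooth: "C_inf_on {0..T} q" and p_smooth: "C_inf_on {0..T} p"
    and aR_smooth: "C_inf_on {0..T} \<alpha>R" and aI_smooth: "C_inf_on {0..T} \<alpha>I"
    and g_smooth: "C_inf_on {0..T} \<gamma>2" and B_smooth: "C_inf_on {0..T} B"
    and aR_sym: "\<forall>t\<in>{0..T}. symmetric_mat (\<alpha>R t)"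
    and aI_sym: "\<forall>t\<in>{0..T}. symmetric_mat (\<alpha>I t)"
    and q_ode: "\<forall>t\<in>{0..T}. vector_derivative q (at t within {0..T}) = p t - A (q t)"
    and p_ode: "\<forall>t\<in>{0..T}. vector_derivative p (at t within {0..T})
        = transpose (jac A (q t)) *v p t - grad U (q t)"
    and alpha_ode: "\<forall>t\<in>{0..T}.
        vector_derivative (\<lambda>s. cplx_mat (\<alpha>R s) (\<alpha>I s)) (at t within {0..T})
        = (let \<alpha> = cplx_mat (\<alpha>R t) (\<alpha>I t) in
             (-2) *\<^sub>R (\<alpha> ** \<alpha>) - (1/2) *\<^sub>R cmat (hess U (q t))
             + cmat (transpose (jac A (q t))) ** \<alpha> + \<alpha> ** cmat (jac A (q t))
             + (1/2) *\<^sub>R cmat (hessA_dot A (q t) (p t)))"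
    and gamma_ode: "\<forall>t\<in>{0..T}. vector_derivative \<gamma>2 (at t within {0..T})
        = of_real ((1/2) * (norm (p t))\<^sup>2 - U (q t)) + \<i> * of_real \<epsilon> * of_real (trace (\<alpha>R t))"
    and B_ode: "\<forall>t\<in>{0..T}. vector_derivative B (at t within {0..T})
        = (-2) *\<^sub>R (B t ** \<alpha>R t) + B t ** jac A (q t)"
    and aI0_pd: "pos_def (\<alpha>I 0)"
    and B0: "B 0 = pos_sqrt (\<alpha>I 0)"
    and B_inv: "\<forall>t\<in>{0..T}. invertible (B t)"
    and w_def: "\<forall>\<eta>. \<forall>t\<in>{0..T}.
        w \<eta> t = (let \<xi> = sqrt \<epsilon> *\<^sub>R (matrix_inv (B t) *v \<eta>) in
          \<psi> (q t + \<xi>) t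
          * exp (- (\<i> / of_real \<epsilon>) * (of_real (\<xi> \<bullet> (\<alpha>R t *v \<xi>) + p t \<bullet> \<xi>) + \<gamma>2 t)))"
  shows "\<forall>\<eta>. \<forall>t\<in>{0..T}.
    (let \<xi> = sqrt \<epsilon> *\<^sub>R (matrix_inv (B t) *v \<eta>);
         a1 = A1 A (q t) \<xi>;
         Bi = matrix_inv (B t) in
    vector_derivative (\<lambda>s. w \<eta> s) (at t within {0..T})
    = \<i> / 2 * trace (cmat (transpose (B t)) ** hess (\<lambda>\<zeta>. w \<zeta> t) \<eta> ** cmat (B t))
      - 2 * \<i> * of_real (\<eta> \<bullet> ((matrix_inv (transpose (B t)) ** \<alpha>I t ** \<alpha>I t ** Bi) *v \<eta>)) * w \<eta> t
      + 1 / of_real (sqrt \<epsilon>) * (\<Sum>j\<in>UNIV. pdx j (\<lambda>\<zeta>. w \<zeta> t) \<eta> * of_real ((B t *v a1) $ j))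
      + 1 / (\<i> * of_real \<epsilon>) * of_real (Ur U (q t) \<xi> - 2 * sqrt \<epsilon> * (a1 \<bullet> (\<alpha>R t *v (Bi *v \<eta>)))
                                          - Ar A (q t) \<xi> \<bullet> p t) * w \<eta> t)"
  apply (intro allI ballI)
  subgoal premises tprem for \<eta> t
proof -
  note t = tprem
  interpret psiloc \<psi> "{0..T}" using psi_smooth by unfold_locales
  define c where "c = sqrt \<epsilon>"
  define Bi where "Bi = matrix_inv (B t)"
  define M where "M = c *\<^sub>R Bi"
  define \<zeta>0 where "\<zeta>0 = Bi *v \<eta>"
  define \<xi> where "\<xi> = c *\<^sub>R \<zeta>0"
  define x where "x = q t + \<xi>"
  define k where "k = - (\<i> / complex_of_real \<epsilon>)"
  define J where "J = jac A (q t)"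
  have c2: "c * c = \<epsilon>" using eps unfolding c_def by simp
  have cpos: "c > 0" using eps unfolding c_def by simp
  have Binv: "invertible (B t)" using B_inv t by blast
  have MB: "M ** B t = c *\<^sub>R mat 1"
    unfolding M_def Bi_def using minv(2)[OF Binv] by (simp add: mm_scaleR)
  have Mv: "M *v z = c *\<^sub>R (Bi *v z)" for z
    unfolding M_def by (simp add: scaleR_matrix_vector_assoc)
  interpret W: Wloc "\<lambda>y. \<psi> y t" "\<alpha>R t" "q t" "p t" "\<gamma>2 t" k
    using psi_diff psi_pdx_diff t aR_sym by unfold_locales (auto simp: symmetric_mat_def)
  have Wexp: "W.W y = \<psi> y t * exp (k * (of_real (phs (\<alpha>R t) (q t) (p t) y) + \<gamma>2 t))" for y
    by (simp add: W.W_def W.Ee_def)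
  have wW: "w \<zeta> t = W.W (q t + M *v \<zeta>)" for \<zeta>
  proof -
    have "w \<zeta> t = (let \<xi> = sqrt \<epsilon> *\<^sub>R (matrix_inv (B t) *v \<zeta>) in
          \<psi> (q t + \<xi>) t
          * exp (- (\<i> / of_real \<epsilon>) * (of_real (\<xi> \<bullet> (\<alpha>R t *v \<xi>) + p t \<bullet> \<xi>) + \<gamma>2 t)))"
      using w_def t by blast
    then show ?thesis unfolding Wexp unfolding Mv Let_def phs_def k_def c_def Bi_def by simp
  qed
  have wfun: "(\<lambda>\<zeta>. w \<zeta> t) = (\<lambda>\<zeta>. W.W (q t + M *v \<zeta>))" using wW by (rule ext)
  have xM: "q t + M *v \<eta> = x" unfolding x_def \<xi>_def \<zeta>0_def Mv ..
  have hessw: "hess (\<lambda>\<zeta>. w \<zeta> t) \<eta> = cmat (transpose M) ** hess W.W x ** cmat M"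
    unfolding wfun W.W_hess xM ..
  have trw: "trace (cmat (transpose (B t)) ** hess (\<lambda>\<zeta>. w \<zeta> t) \<eta> ** cmat (B t))
      = of_real \<epsilon> * (\<Sum>a\<in>UNIV. pdx a (W.G a) x)"
    unfolding hessw trace_conv[OF MB] W.trace_hess_W c2 ..
  have pdw: "pdx j (\<lambda>\<zeta>. w \<zeta> t) \<eta> = (\<Sum>a\<in>UNIV. M$a$j *\<^sub>R W.G a x)" for j
    unfolding wfun aff_pdx[OF W.W_diff] W.W_pdx xM ..
  have grw: "1 / of_real (sqrt \<epsilon>) * (\<Sum>j\<in>UNIV. pdx j (\<lambda>\<zeta>. w \<zeta> t) \<eta> * of_real ((B t *v v) $ j))
      = (\<Sum>a\<in>UNIV. W.G a x * of_real (v $ a))" for v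
  proof -
    have "M *v (B t *v v) = c *\<^sub>R v" by (simp add: matrix_vector_mul_assoc MB scaleR_matrix_vector_assoc[symmetric])
    then have "(\<Sum>j\<in>UNIV. pdx j (\<lambda>\<zeta>. w \<zeta> t) \<eta> * of_real ((B t *v v) $ j))
       = (\<Sum>a\<in>UNIV. W.G a x * (of_real c * of_real (v $ a)))"
      unfolding pdw grad_conv by simp
    then show ?thesis using cpos unfolding c_def[symmetric]
      by (simp add: sum_distrib_left field_simps)
  qed
  have Qc: "\<eta> \<bullet> ((matrix_inv (transpose (B t)) ** \<alpha>I t ** \<alpha>I t ** Bi) *v \<eta>) = \<zeta>0 \<bullet> ((\<alpha>I t ** \<alpha>I t) *v \<zeta>0)"
  proof -
    have e1: "matrix_inv (transpose (B t)) ** \<alpha>I t ** \<alpha>I t ** Bi = transpose Bi ** ((\<alpha>I t ** \<alpha>I t) ** Bi)"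
      unfolding minv_transpose[OF Binv] Bi_def by (simp add: matrix_mul_assoc)
    have e2: "(transpose Bi ** ((\<alpha>I t ** \<alpha>I t) ** Bi)) *v \<eta> = transpose Bi *v ((\<alpha>I t ** \<alpha>I t) *v (Bi *v \<eta>))"
      by (simp only: matrix_vector_mul_assoc)
    show ?thesis unfolding e1 e2 inner_mv_T \<zeta>0_def ..
  qed
  have Qx: "\<xi> \<bullet> ((\<alpha>I t ** \<alpha>I t) *v \<xi>) = \<epsilon> * (\<zeta>0 \<bullet> ((\<alpha>I t ** \<alpha>I t) *v \<zeta>0))"
    unfolding \<xi>_def c2[symmetric] by (simp add: matrix_vector_mult_scaleR)
  have Zc: "2 * sqrt \<epsilon> * (a1 \<bullet> (\<alpha>R t *v (Bi *v \<eta>))) = 2 * (a1 \<bullet> (\<alpha>R t *v \<xi>))" for a1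
    unfolding \<xi>_def \<zeta>0_def c_def by (simp add: matrix_vector_mult_scaleR)
  have w0: "w \<eta> t = \<psi> x t * W.Ee x"
    unfolding wW xM W.W_def ..
  have dq: "(q has_vector_derivative (p t - A (q t))) (at t within {0..T})"
    using cinf_hvd[OF q_smooth t] q_ode t by simp
  have dp: "(p has_vector_derivative (transpose J *v p t - grad U (q t))) (at t within {0..T})"
    using cinf_hvd[OF p_smooth t] p_ode t unfolding J_def by simp
  define aR' where "aR' = vector_derivative \<alpha>R (at t within {0..T})"
  have daR: "(\<alpha>R has_vector_derivative aR') (at t within {0..T})"
    using cinf_hvd[OF aR_smooth t] unfolding aR'_def .
  have aR'_eq: "aR' = (-2) *\<^sub>R (\<alpha>R t ** \<alpha>R t - \<alpha>I t ** \<alpha>I t) - (1/2) *\<^sub>R hess U (q t)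
      + transpose J ** \<alpha>R t + \<alpha>R t ** J + (1/2) *\<^sub>R hessA_dot A (q t) (p t)"
    unfolding J_def
    by (rule alpha_real[OF Tpos t daR cinf_hvd[OF aI_smooth t]]) (use alpha_ode t in blast)
  define g' where "g' = vector_derivative \<gamma>2 (at t within {0..T})"
  have dg: "(\<gamma>2 has_vector_derivative g') (at t within {0..T})"
    using cinf_hvd[OF g_smooth t] unfolding g'_def .
  have g'_eq: "g' = of_real ((1/2) * (norm (p t))\<^sup>2 - U (q t)) + \<i> * of_real \<epsilon> * of_real (trace (\<alpha>R t))"
    using gamma_ode t unfolding g'_def by blast
  define B' where "B' = (-2) *\<^sub>R (B t ** \<alpha>R t) + B t ** J"
  have dB: "(B has_vector_derivative B') (at t within {0..T})"
    using cinf_hvd[OF B_smooth t] B_ode t unfolding B'_def J_def by simp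
  define xd where "xd = 2 *\<^sub>R (\<alpha>R t *v \<xi>) - J *v \<xi>"
  have BiB': "Bi ** B' = (-2) *\<^sub>R \<alpha>R t + J"
    unfolding B'_def matrix_add_ldistrib mm_scaleR2 matrix_mul_assoc Bi_def minv(2)[OF Binv] by simp
  have dxi: "((\<lambda>s. c *\<^sub>R (matrix_inv (B s) *v \<eta>)) has_vector_derivative xd) (at t within {0..T})"
  proof -
    have "((\<lambda>s. c *\<^sub>R (matrix_inv (B s) *v \<eta>)) has_vector_derivative
        c *\<^sub>R (- (Bi *v (B' *v (Bi *v \<eta>))))) (at t within {0..T})"
      unfolding Bi_def
      by (rule bounded_linear.has_vector_derivative[OF bounded_linear_scaleR_right minv_vec_deriv[OF Tpos t dB B_inv]])
    moreover have "c *\<^sub>R (- (Bi *v (B' *v (Bi *v \<eta>)))) = xd"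
    proof -
      have "Bi *v (B' *v (Bi *v \<eta>)) = (Bi ** B') *v \<zeta>0"
        unfolding \<zeta>0_def by (rule matrix_vector_mul_assoc)
      also have "\<dots> = (-2) *\<^sub>R (\<alpha>R t *v \<zeta>0) + J *v \<zeta>0"
        unfolding BiB' by (simp add: matrix_vector_mult_add_rdistrib matrix_vector_mult_diff_rdistrib scaleR_matrix_vector_assoc[symmetric])
      finally have "Bi *v (B' *v (Bi *v \<eta>)) = (-2) *\<^sub>R (\<alpha>R t *v \<zeta>0) + J *v \<zeta>0" .
      then have "c *\<^sub>R (- (Bi *v (B' *v (Bi *v \<eta>)))) = c *\<^sub>R (2 *\<^sub>R (\<alpha>R t *v \<zeta>0) - J *v \<zeta>0)"
        by simp
      also have "\<dots> = xd" unfolding xd_def \<xi>_def matrix_vector_mult_scaleR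
        by (simp add: scaleR_diff_right)
      finally show ?thesis .
    qed
    ultimately show ?thesis by simp
  qed
  define xis where "xis s = c *\<^sub>R (matrix_inv (B s) *v \<eta>)" for s
  have xist: "xis t = \<xi>" unfolding xis_def \<xi>_def \<zeta>0_def Bi_def ..
  define Xs where "Xs s = q s + xis s" for s
  have Xst: "Xs t = x" unfolding Xs_def xist x_def ..
  define X' where "X' = p t - A (q t) + xd"
  have dxis: "(xis has_vector_derivative xd) (at t within {0..T})"
    using dxi unfolding xis_def[abs_def] .
  have dX: "(Xs has_vector_derivative X') (at t within {0..T})"
    unfolding Xs_def[abs_def] X'_def by (rule has_vector_derivative_add[OF dq dxis])
  define p' where "p' = transpose J *v p t - grad U (q t)"
  define Phi where "Phi s = xis s \<bullet> (\<alpha>R s *v xis s) + p s \<bullet> xis s" for s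
  define Phi' where "Phi' = \<xi> \<bullet> (\<alpha>R t *v xd + aR' *v \<xi>) + xd \<bullet> (\<alpha>R t *v \<xi>) + (p t \<bullet> xd + p' \<bullet> \<xi>)"
  have dPhi: "(Phi has_vector_derivative Phi') (at t within {0..T})"
    unfolding Phi_def[abs_def] Phi'_def
    using has_vector_derivative_add[OF hvd_inner[OF dxis hvd_mv[OF daR dxis]] hvd_inner[OF dp[folded p'_def] dxis]]
    unfolding xist .
  define E where "E s = exp (k * (of_real (Phi s) + \<gamma>2 s))" for s
  have dE: "(E has_vector_derivative (E t * (k * (of_real Phi' + g')))) (at t within {0..T})"
  proof -
    have "((\<lambda>s. k * (of_real (Phi s) + \<gamma>2 s)) has_vector_derivative (k * (of_real Phi' + g'))) (at t within {0..T})"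
      by (rule bounded_linear.has_vector_derivative[OF bounded_linear_mult_right
            has_vector_derivative_add[OF hvd_ofreal[OF dPhi] dg]])
    from hvd_cexp[OF this] show ?thesis unfolding E_def[abs_def] .
  qed
  have Et: "E t = W.Ee x"
    unfolding E_def W.Ee_def Phi_def phs_def xist x_def by simp
  define D where "D = frechet_derivative Psi (at (x, t) within UNIV \<times> {0..T})"
  have Pd: "Psi differentiable at (x, t) within UNIV \<times> {0..T}" using Psi_diff t by simp
  have dpsi: "((\<lambda>s. \<psi> (Xs s) s) has_vector_derivative D (X', 1)) (at t within {0..T})"
    using chain_t[OF Pd[folded Xst] dX] unfolding Xst D_def by simp
  define psit where "psit = vector_derivative (\<lambda>s. \<psi> x s) (at t within {0..T})"
  have D01: "D (0, 1) = psit"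
    unfolding psit_def D_def using vector_derivative_within_closed_interval[OF Tpos t psi_t[OF t, of x]] by simp
  have DX: "D (X', 1) = (\<Sum>a\<in>UNIV. X' $ a *\<^sub>R pdx a (\<lambda>y. \<psi> y t) x) + psit"
    unfolding D_def fd_split[OF Pd, of X' 1] psi_fd[OF t] D01[unfolded D_def] by simp
  have dprod: "((\<lambda>s. \<psi> (Xs s) s * E s) has_vector_derivative
      (\<psi> x t * (E t * (k * (of_real Phi' + g'))) + D (X', 1) * E t)) (at t within {0..T})"
    using has_vector_derivative_mult[OF dpsi dE] unfolding Xst .
  have weq: "w \<eta> s = \<psi> (Xs s) s * E s" if s: "s \<in> {0..T}" for s
  proof -
    have "w \<eta> s = (let \<xi> = sqrt \<epsilon> *\<^sub>R (matrix_inv (B s) *v \<eta>) in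
          \<psi> (q s + \<xi>) s
          * exp (- (\<i> / of_real \<epsilon>) * (of_real (\<xi> \<bullet> (\<alpha>R s *v \<xi>) + p s \<bullet> \<xi>) + \<gamma>2 s)))"
      using w_def s by blast
    then show ?thesis unfolding Xs_def E_def Phi_def xis_def k_def c_def Let_def .
  qed
  have vd: "vector_derivative (\<lambda>s. w \<eta> s) (at t within {0..T})
      = ((\<Sum>a\<in>UNIV. X' $ a *\<^sub>R pdx a (\<lambda>y. \<psi> y t) x) + psit) * W.Ee x
        + \<psi> x t * (W.Ee x * (k * (of_real Phi' + g')))"
  proof -
    have "((\<lambda>s. w \<eta> s) has_vector_derivative
      (\<psi> x t * (E t * (k * (of_real Phi' + g'))) + D (X', 1) * E t)) (at t within {0..T})"
      by (rule has_vector_derivative_transform_within[OF dprod zero_less_one t]) (use weq in auto)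
    from vector_derivative_within_closed_interval[OF Tpos t this]
    show ?thesis unfolding DX Et by (simp add: add.commute)
  qed
  define a1 where "a1 = A1 A (q t) \<xi>"
  define r where "r = rr (\<alpha>R t) (q t) (p t) x"
  define Q where "Q = \<zeta>0 \<bullet> ((\<alpha>I t ** \<alpha>I t) *v \<zeta>0)"
  define ReG where "ReG = (1/2) * (norm (p t))\<^sup>2 - U (q t)"
  define Z where "Z = Ur U (q t) \<xi> - 2 * (a1 \<bullet> (\<alpha>R t *v \<xi>)) - Ar A (q t) \<xi> \<bullet> p t"
  have xq: "x - q t = \<xi>" unfolding x_def by simp
  have schr: "\<i> * of_real \<epsilon> * psit = - of_real (\<epsilon>\<^sup>2 / 2) * (\<Sum>a\<in>UNIV. pdx a (pdx a (\<lambda>y. \<psi> y t)) x)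
          + \<i> * of_real \<epsilon> * (\<Sum>j\<in>UNIV. of_real (A x $ j) * pdx j (\<lambda>y. \<psi> y t) x) + of_real (U x) * \<psi> x t"
    using schroedinger t unfolding psit_def laplacian_def by blast
  have vec: "X' + A x = r + a1"
    unfolding X'_def r_def rr_def a1_def A1_def xd_def xq J_def x_def
    by (simp add: algebra_simps)
  have real: "Phi' + ReG + U x = (1/2) * (r \<bullet> r) + 2 * (\<epsilon> * Q) + r \<bullet> a1 + Z"
  proof -
    have RI: "xd \<bullet> (\<alpha>R t *v \<xi>) + \<xi> \<bullet> (aR' *v \<xi> + \<alpha>R t *v xd) + p' \<bullet> \<xi> + p t \<bullet> xd + ((1/2) * (norm (p t))\<^sup>2 - U (q t)) + U (\<xi> + q t)
      = (1/2) * (r \<bullet> r) + 2 * (\<xi> \<bullet> ((\<alpha>I t ** \<alpha>I t) *v \<xi>)) + r \<bullet> a1 + (Ur U (q t) \<xi> - 2 * (a1 \<bullet> (\<alpha>R t *v \<xi>)) - (a1 - Aq A (q t) \<xi>) \<bullet> p t)"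
      by (rule real_identity[OF _ xd_def aR'_eq[folded J_def] p'_def a1_def[unfolded A1_def J_def[symmetric]] Aq_p _ r_def[unfolded rr_def xq]])
        (use aR_sym t in \<open>auto simp: symmetric_mat_def Ur_def\<close>)
    have "Phi' = xd \<bullet> (\<alpha>R t *v \<xi>) + \<xi> \<bullet> (aR' *v \<xi> + \<alpha>R t *v xd) + p' \<bullet> \<xi> + p t \<bullet> xd"
      unfolding Phi'_def by (simp add: inner_add_right)
    moreover have "U x = U (\<xi> + q t)" unfolding x_def by (simp add: add.commute)
    moreover have "Ar A (q t) \<xi> = a1 - Aq A (q t) \<xi>" unfolding Ar_def a1_def ..
    ultimately show ?thesis using RI unfolding ReG_def Z_def Qx[folded Q_def] by simp
  qed
  have gd: "g' = of_real ReG + \<i> * of_real \<epsilon> * of_real (\<Sum>a\<in>UNIV. \<alpha>R t $ a $ a)"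
    unfolding g'_eq ReG_def trace_def ..
  note CI = complex_identity[OF eps k_def schr vec real gd]
  have xi_eq: "sqrt \<epsilon> *\<^sub>R (matrix_inv (B t) *v \<eta>) = \<xi>" unfolding \<xi>_def \<zeta>0_def c_def Bi_def ..
  have Bi_eq: "matrix_inv (B t) = Bi" unfolding Bi_def ..
  have xi_eq2: "sqrt \<epsilon> *\<^sub>R (Bi *v \<eta>) = \<xi>" unfolding \<xi>_def \<zeta>0_def c_def ..
  show ?thesis
    unfolding Let_def xi_eq Bi_eq xi_eq2 vd trw Qc grw Zc w0 W.G_pdx
    unfolding a1_def[symmetric] Q_def[symmetric] Z_def[symmetric] W.G_def r_def[symmetric]
    by (rule CI)
qed
  done

end
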